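(* Let $r\ge 1$ and $l\ge 0$ be integers, let $n$ be a positive integer and let $x$ be a real number. Then \[ \sum_{1\le i_1\le i_2\le\cdots\le i_r\le n}(x+i_1)_l=\frac{(x+n+r)_{l+r}}{(l+r)_r}-\sum_{i=1}^r\binom{n+r-i-1}{r-i}\frac{(x+i)_{l+i}}{(l+i)_i}. \]
   Context: $(y)_k=y(y-1)\cdots(y-k+1)$ denotes the lower (falling) factorial, with $(y)_0=1$. The left-hand side is the $r$-fold sum ${\sum}^r (x+n)_l$, where for a function $f$ one sets ${\sum}^0 f(n)=f(n)$ and ${\sum}^r f(n)={\sum}^{r-1}f(1)+\cdots+{\sum}^{r-1}f(n)$. *)

theory Defs
  imports Complex_Main
begin

definition falling :: "real \<Rightarrow> nat \<Rightarrow> real" where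
  "falling y k = (\<Prod>j<k. y - real j)"

fun rsum :: "nat \<Rightarrow> (nat \<Rightarrow> real) \<Rightarrow> nat \<Rightarrow> real" where
  "rsum 0 f n = f n"
| "rsum (Suc r) f n = (\<Sum>m=1..n. rsum r f m)"

end

theory Submission
  imports Defs
begin

lemma falling_Suc_shift: "falling (y + 1) (Suc k) = (y + 1) * falling y k"
  unfolding falling_def by (subst prod.lessThan_Suc_shift) (simp add: algebra_simps)

lemma falling_Suc: "falling y (Suc k) = falling y k * (y - real k)"
  unfolding falling_def by simp

lemma falling_diff: "falling (y + 1) (Suc k) - falling y (Suc k) = real (Suc k) * falling y k"
proof -
  have "falling (y + 1) (Suc k) = (y + 1) * falling y k" by (rule falling_Suc_shift)
  moreover have "falling y (Suc k) = falling y k * (y - real k)" by (rule falling_Suc)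
  ultimately show ?thesis by (simp add: algebra_simps)
qed

lemma falling_sum:
  "(\<Sum>m=1..n. falling (a + real m) k) =
     (falling (a + real n + 1) (Suc k) - falling (a + 1) (Suc k)) / real (Suc k)"
proof (induction n)
  case 0 then show ?case by simp
next
  case (Suc n)
  have "(\<Sum>m=1..Suc n. falling (a + real m) k) = (\<Sum>m=1..n. falling (a + real m) k) + falling (a + real (Suc n)) k"
    by simp
  also have "\<dots> = (falling (a + real n + 1) (Suc k) - falling (a + 1) (Suc k)) / real (Suc k)
     + (falling (a + real (Suc n) + 1) (Suc k) - falling (a + real (Suc n)) (Suc k)) / real (Suc k)"
  proof -
    have "falling (a + real (Suc n)) k = (falling (a + real (Suc n) + 1) (Suc k) - falling (a + real (Suc n)) (Suc k)) / real (Suc k)"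
      using falling_diff[of "a + real (Suc n)" k] by (simp del: of_nat_Suc)
    moreover have "a + real n + 1 = a + real (Suc n)" by simp
    ultimately show ?thesis using Suc by (simp only:)
  qed
  also have "\<dots> = (falling (a + real (Suc n) + 1) (Suc k) - falling (a + 1) (Suc k)) / real (Suc k)"
    by (simp add: diff_divide_distrib add_ac)
  finally show ?case .
qed

lemma hockey: "(\<Sum>m=1..n. (m + j - 1) choose j) = (n + j) choose (Suc j)"
proof (induction n)
  case 0 then show ?case by simp
next
  case (Suc n)
  then show ?case by (simp add: add.commute)
qed

lemma falling_pos: "falling (real (l + r)) r > 0"
  unfolding falling_def by (intro prod_pos) auto

lemma main:
  fixes r l n :: nat and x :: real
  assumes "n \<ge> 1"
  shows "rsum (Suc r) (\<lambda>m. falling (x + real m) l) n =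
           falling (x + real n + real (Suc r)) (l + Suc r) / falling (real (l + Suc r)) (Suc r)
         - (\<Sum>i=1..Suc r. real ((n + Suc r - i - 1) choose (Suc r - i))
              * falling (x + real i) (l + i) / falling (real (l + i)) i)"
  using assms
proof (induction r arbitrary: n)
  case 0
  have D: "falling (real (l + 1)) 1 = real (Suc l)" unfolding falling_def by simp
  show ?case using falling_sum[where a=x and n=n and k=l] D by (simp add: diff_divide_distrib algebra_simps)
next
  case (Suc r)
  define G where "G i = falling (x + real i) (l + i) / falling (real (l + i)) i" for i
  define D where "D k = falling (real (l + k)) k" for k
  have DS: "D (Suc (Suc r)) = real (l + Suc (Suc r)) * D (Suc r)"
    unfolding D_def using falling_Suc_shift[of "real (l + Suc r)" "Suc r"]
    by (simp add: add.commute add.left_commute)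
  have Dpos: "D (Suc r) > 0" unfolding D_def by (rule falling_pos)
  have "rsum (Suc (Suc r)) (\<lambda>m. falling (x + real m) l) n =
      (\<Sum>m=1..n. falling (x + real (Suc r) + real m) (l + Suc r) / D (Suc r)
         - (\<Sum>i=1..Suc r. real ((m + Suc r - i - 1) choose (Suc r - i)) * G i))"
    unfolding rsum.simps(2)[of "Suc r"]
  proof (intro sum.cong refl)
    fix m assume "m \<in> {1..n}"
    then have "m \<ge> 1" by simp
    from Suc.IH[OF this] show "rsum (Suc r) (\<lambda>m. falling (x + real m) l) m =
      falling (x + real (Suc r) + real m) (l + Suc r) / D (Suc r)
         - (\<Sum>i=1..Suc r. real ((m + Suc r - i - 1) choose (Suc r - i)) * G i)"
      unfolding G_def D_def by (simp add: algebra_simps)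
  qed
  also have "\<dots> = (\<Sum>m=1..n. falling (x + real (Suc r) + real m) (l + Suc r)) / D (Suc r)
      - (\<Sum>i=1..Suc r. (\<Sum>m=1..n. real ((m + Suc r - i - 1) choose (Suc r - i))) * G i)"
  proof -
    have "(\<Sum>m=1..n. \<Sum>i=1..Suc r. real ((m + Suc r - i - 1) choose (Suc r - i)) * G i)
       = (\<Sum>i=1..Suc r. \<Sum>m=1..n. real ((m + Suc r - i - 1) choose (Suc r - i)) * G i)"
      by (rule sum.swap)
    also have "\<dots> = (\<Sum>i=1..Suc r. (\<Sum>m=1..n. real ((m + Suc r - i - 1) choose (Suc r - i))) * G i)"
      by (simp only: sum_distrib_right)
    finally have sw: "(\<Sum>m=1..n. \<Sum>i=1..Suc r. real ((m + Suc r - i - 1) choose (Suc r - i)) * G i)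
       = (\<Sum>i=1..Suc r. (\<Sum>m=1..n. real ((m + Suc r - i - 1) choose (Suc r - i))) * G i)" .
    show ?thesis by (simp only: sum_subtractf sum_divide_distrib sw)
  qed
  also have "(\<Sum>m=1..n. falling (x + real (Suc r) + real m) (l + Suc r)) =
      (falling (x + real (Suc r) + real n + 1) (Suc (l + Suc r)) - falling (x + real (Suc r) + 1) (Suc (l + Suc r))) / real (Suc (l + Suc r))"
    by (rule falling_sum)
  also have "(\<Sum>i=1..Suc r. (\<Sum>m=1..n. real ((m + Suc r - i - 1) choose (Suc r - i))) * G i)
      = (\<Sum>i=1..Suc r. real ((n + Suc (Suc r) - i - 1) choose (Suc (Suc r) - i)) * G i)"
  proof (intro sum.cong refl)
    fix i assume i: "i \<in> {1..Suc r}"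
    have "(\<Sum>m=1..n. real ((m + Suc r - i - 1) choose (Suc r - i))) =
        real (\<Sum>m=1..n. (m + (Suc r - i) - 1) choose (Suc r - i))"
      using i by (simp add: of_nat_sum)
    also have "\<dots> = real ((n + (Suc r - i)) choose (Suc (Suc r - i)))" by (simp only: hockey)
    also have "\<dots> = real ((n + Suc (Suc r) - i - 1) choose (Suc (Suc r) - i))"
      using i by (simp add: Suc_diff_le)
    finally show "(\<Sum>m=1..n. real ((m + Suc r - i - 1) choose (Suc r - i))) * G i =
       real ((n + Suc (Suc r) - i - 1) choose (Suc (Suc r) - i)) * G i" by simp
  qed
  finally have E: "rsum (Suc (Suc r)) (\<lambda>m. falling (x + real m) l) n =
     (falling (x + real (Suc r) + real n + 1) (Suc (l + Suc r)) - falling (x + real (Suc r) + 1) (Suc (l + Suc r))) / real (Suc (l + Suc r)) / D (Suc r)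
     - (\<Sum>i=1..Suc r. real ((n + Suc (Suc r) - i - 1) choose (Suc (Suc r) - i)) * G i)" .
  have last: "(\<Sum>i=1..Suc (Suc r). real ((n + Suc (Suc r) - i - 1) choose (Suc (Suc r) - i)) * G i)
     = (\<Sum>i=1..Suc r. real ((n + Suc (Suc r) - i - 1) choose (Suc (Suc r) - i)) * G i) + G (Suc (Suc r))"
    using Suc.prems by simp
  have G2: "G (Suc (Suc r)) = falling (x + real (Suc r) + 1) (Suc (l + Suc r)) / real (Suc (l + Suc r)) / D (Suc r)"
    unfolding G_def DS[unfolded D_def] D_def by (simp add: algebra_simps)
  have P: "falling (x + real n + real (Suc (Suc r))) (l + Suc (Suc r)) =
     falling (x + real (Suc r) + real n + 1) (Suc (l + Suc r))"
    by (simp add: algebra_simps)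
  have DL: "falling (real (l + Suc (Suc r))) (Suc (Suc r)) = real (Suc (l + Suc r)) * D (Suc r)"
    using DS unfolding D_def by simp
  have GG: "(\<Sum>i=1..Suc (Suc r). real ((n + Suc (Suc r) - i - 1) choose (Suc (Suc r) - i))
              * falling (x + real i) (l + i) / falling (real (l + i)) i)
     = (\<Sum>i=1..Suc (Suc r). real ((n + Suc (Suc r) - i - 1) choose (Suc (Suc r) - i)) * G i)"
    unfolding G_def by (simp add: algebra_simps)
  show ?case unfolding GG last E G2 P DL
    by (simp add: diff_divide_distrib)
qed

theorem mainTheorem2:
  fixes r l n :: nat and x :: real
  assumes "r \<ge> 1" and "n \<ge> 1"
  shows "rsum r (\<lambda>m. falling (x + real m) l) n =
           falling (x + real n + real r) (l + r) / falling (real (l + r)) r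
         - (\<Sum>i=1..r. real ((n + r - i - 1) choose (r - i))
              * falling (x + real i) (l + i) / falling (real (l + i)) i)"
proof -
  obtain r' where r: "r = Suc r'" using assms(1) by (cases r) auto
  show ?thesis unfolding r by (rule main[OF assms(2)])
qed

end
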